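(* Let $m_j(x,y)=x^{k_j}y^{l_j}$, $j=1,\dots,q$, be monomials with nonnegative integer exponents, and let $f(x,y)=c_1m_1(x,y)+\cdots+c_qm_q(x,y)$ with real coefficients satisfying $|c_j|\le1$ for $j=1,\dots,q$. Let $\delta>0$ and for $i=1,\dots,N$ let $$S_i=\{(x,y)\mid x=x_i>0,\ 0<y_i-\delta\le y\le y_i+\delta\}$$ be vertical segments, and suppose that for every $i$ the curve $f=0$ passes through $S_i$ (i.e. $f$ vanishes at some point of $S_i$). Then $$\sum_{i=1}^N f(x_i,y_i)^2\le \delta^2\,q\sum_{i=1}^N h(x_i,y_i+\delta),\qquad\text{where } h(x,y)=\sum_{j=1}^q\Big(\frac{\partial m_j(x,y)}{\partial y}\Big)^2.$$ *)

theory Defs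
  imports "HOL-Analysis.Analysis"
begin

definition monom2 :: "nat \<Rightarrow> nat \<Rightarrow> real \<Rightarrow> real \<Rightarrow> real" where
  "monom2 k l x y = x ^ k * y ^ l"

end

theory Submission
  imports Defs
begin

lemma deriv_monom2: "deriv (\<lambda>t. monom2 k l x t) y = x ^ k * (real l * y ^ (l - 1))"
proof -
  have "((\<lambda>t. x ^ k * t ^ l) has_real_derivative x ^ k * (real l * y ^ (l - 1))) (at y)"
    by (auto intro!: derivative_eq_intros)
  then show ?thesis unfolding monom2_def by (rule DERIV_imp_deriv)
qed

lemma pow_diff_bound:
  fixes a b M :: real
  assumes "0 \<le> a" "0 \<le> b" "a \<le> M" "b \<le> M"
  shows "\<bar>a ^ n - b ^ n\<bar> \<le> real n * M ^ (n - 1) * \<bar>a - b\<bar>"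
proof -
  have M0: "0 \<le> M" using assms by linarith
  have t: "b ^ (n - Suc i) * a ^ i \<le> M ^ (n - 1)" if "i < n" for i
  proof -
    have "b ^ (n - Suc i) * a ^ i \<le> M ^ (n - Suc i) * M ^ i"
      using assms by (intro mult_mono power_mono) auto
    also have "\<dots> = M ^ (n - 1)" using that by (simp add: power_add[symmetric])
    finally show ?thesis .
  qed
  have "\<bar>a ^ n - b ^ n\<bar> = \<bar>a - b\<bar> * \<bar>\<Sum>i<n. b ^ (n - Suc i) * a ^ i\<bar>"
    by (simp add: power_diff_sumr2 abs_mult)
  also have "\<bar>\<Sum>i<n. b ^ (n - Suc i) * a ^ i\<bar> = (\<Sum>i<n. b ^ (n - Suc i) * a ^ i)"
    using assms by (intro abs_of_nonneg sum_nonneg) auto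
  also have "(\<Sum>i<n. b ^ (n - Suc i) * a ^ i) \<le> (\<Sum>i<n. M ^ (n - 1))"
    by (intro sum_mono t) auto
  finally have "\<bar>a ^ n - b ^ n\<bar> \<le> \<bar>a - b\<bar> * (\<Sum>i<n. M ^ (n - 1))"
    by (simp add: mult_left_mono)
  then show ?thesis by (simp add: mult.commute mult.left_commute)
qed

theorem theorem2:
  fixes q N :: nat
    and k l :: "nat \<Rightarrow> nat"
    and c :: "nat \<Rightarrow> real"
    and xs ys :: "nat \<Rightarrow> real"
    and \<delta> :: real
    and f h :: "real \<Rightarrow> real \<Rightarrow> real"
  assumes f_def: "\<And>x y. f x y = (\<Sum>j=1..q. c j * monom2 (k j) (l j) x y)"
    and h_def: "\<And>x y. h x y = (\<Sum>j=1..q. (deriv (\<lambda>t. monom2 (k j) (l j) x t) y)^2)"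
    and c_bound: "\<And>j. j \<in> {1..q} \<Longrightarrow> \<bar>c j\<bar> \<le> 1"
    and delta_pos: "\<delta> > 0"
    and x_pos: "\<And>i. i \<in> {1..N} \<Longrightarrow> xs i > 0"
    and seg_pos: "\<And>i. i \<in> {1..N} \<Longrightarrow> ys i - \<delta> > 0"
    and passes: "\<And>i. i \<in> {1..N} \<Longrightarrow>
                   \<exists>y. ys i - \<delta> \<le> y \<and> y \<le> ys i + \<delta> \<and> f (xs i) y = 0"
  shows "(\<Sum>i=1..N. (f (xs i) (ys i))^2) \<le> \<delta>^2 * real q * (\<Sum>i=1..N. h (xs i) (ys i + \<delta>))"
proof -
  have each: "(f (xs i) (ys i))^2 \<le> \<delta>^2 * real q * h (xs i) (ys i + \<delta>)" if i: "i \<in> {1..N}" for i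
  proof -
    define x where "x = xs i"
    define Y where "Y = ys i + \<delta>"
    define d where "d j = x ^ k j * (real (l j) * Y ^ (l j - 1))" for j
    obtain y0 where y0: "ys i - \<delta> \<le> y0" "y0 \<le> ys i + \<delta>" "f x y0 = 0"
      using passes[OF i] unfolding x_def by blast
    have xp: "x > 0" using x_pos[OF i] x_def by simp
    have sp: "ys i - \<delta> > 0" using seg_pos[OF i] .
    have dnn: "0 \<le> d j" for j unfolding d_def using xp sp delta_pos Y_def by auto
    have "f x (ys i) = f x (ys i) - f x y0" using y0 by simp
    also have "\<dots> = (\<Sum>j=1..q. c j * x ^ k j * ys i ^ l j) - (\<Sum>j=1..q. c j * x ^ k j * y0 ^ l j)"
      by (simp add: f_def monom2_def mult.assoc)
    also have "\<dots> = (\<Sum>j=1..q. c j * x ^ k j * (ys i ^ l j - y0 ^ l j))"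
      by (simp add: sum_subtractf[symmetric] right_diff_distrib)
    finally have fe: "f x (ys i) = (\<Sum>j=1..q. c j * x ^ k j * (ys i ^ l j - y0 ^ l j))" .
    have tb: "\<bar>c j * x ^ k j * (ys i ^ l j - y0 ^ l j)\<bar> \<le> \<delta> * d j" if j: "j \<in> {1..q}" for j
    proof -
      have pd: "\<bar>ys i ^ l j - y0 ^ l j\<bar> \<le> real (l j) * Y ^ (l j - 1) * \<bar>ys i - y0\<bar>"
        using sp y0 delta_pos unfolding Y_def by (intro pow_diff_bound) auto
      have ad: "\<bar>ys i - y0\<bar> \<le> \<delta>" using y0 by auto
      have "\<bar>c j * x ^ k j * (ys i ^ l j - y0 ^ l j)\<bar> = \<bar>c j\<bar> * x ^ k j * \<bar>ys i ^ l j - y0 ^ l j\<bar>"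
        using xp by (simp add: abs_mult)
      also have "\<dots> \<le> 1 * x ^ k j * (real (l j) * Y ^ (l j - 1) * \<bar>ys i - y0\<bar>)"
        using c_bound[OF j] xp pd by (intro mult_mono) auto
      also have "\<dots> \<le> 1 * x ^ k j * (real (l j) * Y ^ (l j - 1) * \<delta>)"
        using ad sp delta_pos xp unfolding Y_def by (intro mult_left_mono) auto
      also have "\<dots> = \<delta> * d j" unfolding d_def by (simp add: algebra_simps)
      finally show ?thesis .
    qed
    have "\<bar>f x (ys i)\<bar> \<le> (\<Sum>j=1..q. \<bar>c j * x ^ k j * (ys i ^ l j - y0 ^ l j)\<bar>)"
      unfolding fe by (rule sum_abs)
    also have "\<dots> \<le> (\<Sum>j=1..q. \<delta> * d j)" by (intro sum_mono tb)
    also have "\<dots> = \<delta> * sum d {1..q}" by (simp add: sum_distrib_left)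
    finally have ab: "\<bar>f x (ys i)\<bar> \<le> \<delta> * sum d {1..q}" .
    have "(f x (ys i))^2 = \<bar>f x (ys i)\<bar>^2" by simp
    also have "\<dots> \<le> (\<delta> * sum d {1..q})^2"
      by (intro power_mono ab) auto
    also have "\<dots> = \<delta>^2 * (sum d {1..q})^2" by (simp add: power_mult_distrib)
    also have "\<dots> \<le> \<delta>^2 * ((\<Sum>j\<in>{1..q}. (d j)^2) * real (card {1..q}))"
      by (intro mult_left_mono sum_squared_le_sum_of_squares) auto
    also have "\<dots> = \<delta>^2 * real q * h x Y"
      unfolding h_def deriv_monom2 d_def by simp
    finally show ?thesis unfolding x_def Y_def .
  qed
  have "(\<Sum>i=1..N. (f (xs i) (ys i))^2) \<le> (\<Sum>i=1..N. \<delta>^2 * real q * h (xs i) (ys i + \<delta>))"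
    by (intro sum_mono each) auto
  also have "\<dots> = \<delta>^2 * real q * (\<Sum>i=1..N. h (xs i) (ys i + \<delta>))"
    by (simp add: sum_distrib_left)
  finally show ?thesis .
qed

end
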